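(* Let $q^*$ be a fixed point of $S$ achieving the rate-distortion-perception function, and let $$M_{ij}=q^*(i)\sum_xp(x)\frac{A(x,i)A(x,j)}{\big(\sum_kq^*(k)A(x,k)\big)^2}.$$ Then every eigenvalue $\lambda$ of $M$ satisfies $\lambda\le1$.
   Context: Finite alphabets $\mathcal X=\hat{\mathcal X}$, source distribution $p$, distortion $d\ge0$, and multipliers $s_1,s_2\ge0$. $f:(0,\infty)\to\mathbb R$ is convex, twice differentiable, with $f(1)=0$, and $D_f(p\|q)=\sum_xq(x)f(p(x)/q(x))$. $S$ is the implicitly defined map $$S[q](i)=q(i)\sum_xp(x)\frac{A_q(x,i)}{\sum_kq(k)A_q(x,k)},\qquad A_q(x,i)=\exp\{-s_1d(x,i)-s_2[f(p(i)/S[q](i))-\tfrac{p(i)}{S[q](i)}f'(p(i)/S[q](i))]\},$$ and $A=A_{q^*}$. *)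

theory Defs
  imports "HOL-Analysis.Analysis"
begin

text \<open>Finite alphabet: a finite type 'a, used both for the source alphabet X and the
reconstruction alphabet (X = hat X).  Distributions are functions 'a => real.\<close>

definition is_pmf :: "('a::finite \<Rightarrow> real) \<Rightarrow> bool" where
  "is_pmf q \<longleftrightarrow> (\<forall>x. 0 \<le> q x) \<and> (\<Sum>x\<in>UNIV. q x) = 1"

definition A_fac :: "real \<Rightarrow> real \<Rightarrow> ('a \<Rightarrow> 'a \<Rightarrow> real) \<Rightarrow> (real \<Rightarrow> real)
    \<Rightarrow> ('a \<Rightarrow> real) \<Rightarrow> ('a \<Rightarrow> real) \<Rightarrow> 'a \<Rightarrow> 'a \<Rightarrow> real" where
  "A_fac s1 s2 d f p r x i =
     exp (- s1 * d x i - s2 * (f (p i / r i) - p i / r i * deriv f (p i / r i)))"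

text \<open>The implicitly defined map S: "S_image s1 s2 d f p q r" states r = S[q], i.e.
  r(i) = q(i) * sum_x p(x) A_q(x,i) / sum_k q(k) A_q(x,k), where A_q is built from r = S[q].\<close>

definition S_image :: "real \<Rightarrow> real \<Rightarrow> ('a::finite \<Rightarrow> 'a \<Rightarrow> real) \<Rightarrow> (real \<Rightarrow> real)
    \<Rightarrow> ('a \<Rightarrow> real) \<Rightarrow> ('a \<Rightarrow> real) \<Rightarrow> ('a \<Rightarrow> real) \<Rightarrow> bool" where
  "S_image s1 s2 d f p q r \<longleftrightarrow>
     (\<forall>i. r i = q i * (\<Sum>x\<in>UNIV. p x * A_fac s1 s2 d f p r x i
                         / (\<Sum>k\<in>UNIV. q k * A_fac s1 s2 d f p r x k)))"

definition S_fixed_point :: "real \<Rightarrow> real \<Rightarrow> ('a::finite \<Rightarrow> 'a \<Rightarrow> real) \<Rightarrow> (real \<Rightarrow> real)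
    \<Rightarrow> ('a \<Rightarrow> real) \<Rightarrow> ('a \<Rightarrow> real) \<Rightarrow> bool" where
  "S_fixed_point s1 s2 d f p q \<longleftrightarrow> S_image s1 s2 d f p q q"

definition M_mat :: "real \<Rightarrow> real \<Rightarrow> ('a::finite \<Rightarrow> 'a \<Rightarrow> real) \<Rightarrow> (real \<Rightarrow> real)
    \<Rightarrow> ('a \<Rightarrow> real) \<Rightarrow> ('a \<Rightarrow> real) \<Rightarrow> real^'a^'a" where
  "M_mat s1 s2 d f p q = (\<chi> i j. q i * (\<Sum>x\<in>UNIV.
       p x * A_fac s1 s2 d f p q x i * A_fac s1 s2 d f p q x j
       / (\<Sum>k\<in>UNIV. q k * A_fac s1 s2 d f p q x k)^2))"

definition eigenvalue_of :: "real^'n^'n \<Rightarrow> complex \<Rightarrow> bool" where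
  "eigenvalue_of M lam \<longleftrightarrow>
     (\<exists>v::complex^'n. v \<noteq> 0 \<and> (\<chi> i j. complex_of_real (M $ i $ j)) *v v = lam *s v)"

end

theory Submission imports Defs begin

lemma jensen_sq:
  fixes al t :: "'a \<Rightarrow> real" and S :: "'a set"
  assumes "finite S" "\<And>x. x \<in> S \<Longrightarrow> 0 \<le> al x" "(\<Sum>x\<in>S. al x) = 1"
  shows "(\<Sum>x\<in>S. al x * t x)^2 \<le> (\<Sum>x\<in>S. al x * (t x)^2)"
proof -
  define m where "m = (\<Sum>x\<in>S. al x * t x)"
  have "0 \<le> (\<Sum>x\<in>S. al x * (t x - m)^2)"
    using assms by (intro sum_nonneg) auto
  also have "\<dots> = (\<Sum>x\<in>S. al x * (t x)^2) - 2 * m * (\<Sum>x\<in>S. al x * t x) + m^2 * (\<Sum>x\<in>S. al x)"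
    by (simp add: power2_eq_square algebra_simps sum.distrib sum_subtractf sum_distrib_left)
  also have "\<dots> = (\<Sum>x\<in>S. al x * (t x)^2) - m^2"
    using assms(3) by (simp add: m_def power2_eq_square)
  finally show ?thesis by (simp add: m_def)
qed

lemma core:
  fixes q p :: "'a::finite \<Rightarrow> real" and a :: "'a \<Rightarrow> 'a \<Rightarrow> real" and v :: "'a \<Rightarrow> complex"
    and Z :: "'a \<Rightarrow> real" and lam :: complex
  assumes q: "\<And>i. 0 \<le> q i" and p: "\<And>x. 0 \<le> p x" and a: "\<And>x i. 0 < a x i"
    and Zdef: "\<And>x. Z x = (\<Sum>k\<in>UNIV. q k * a x k)" and Zpos: "\<And>x. 0 < Z x"
    and fp: "\<And>i. 0 < q i \<Longrightarrow> (\<Sum>x\<in>UNIV. p x * a x i / Z x) = 1"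
    and eig: "\<And>i. (\<Sum>j\<in>UNIV. complex_of_real (q i * (\<Sum>x\<in>UNIV. p x * a x i * a x j / (Z x)^2)) * v j) = lam * v i"
    and vnz: "v i0 \<noteq> 0"
  shows "Im lam = 0 \<and> Re lam \<le> 1"
proof -
  define u where "u x = (\<Sum>j\<in>UNIV. complex_of_real (a x j) * v j)" for x
  define w where "w i = (\<Sum>x\<in>UNIV. complex_of_real (p x * a x i / (Z x)^2) * u x)" for i
  have qw: "complex_of_real (q i) * w i = lam * v i" for i
  proof -
    have "(\<Sum>j\<in>UNIV. complex_of_real (q i * (\<Sum>x\<in>UNIV. p x * a x i * a x j / (Z x)^2)) * v j)
       = complex_of_real (q i) * w i"
    proof -
      have "(\<Sum>j\<in>UNIV. complex_of_real (q i * (\<Sum>x\<in>UNIV. p x * a x i * a x j / (Z x)^2)) * v j)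
        = (\<Sum>j\<in>UNIV. \<Sum>x\<in>UNIV. complex_of_real (q i) * (complex_of_real (p x * a x i / (Z x)^2) * (complex_of_real (a x j) * v j)))"
        by (intro sum.cong refl) (simp add: sum_distrib_left sum_distrib_right mult_ac)
      also have "\<dots> = (\<Sum>x\<in>UNIV. \<Sum>j\<in>UNIV. complex_of_real (q i) * (complex_of_real (p x * a x i / (Z x)^2) * (complex_of_real (a x j) * v j)))"
        by (rule sum.swap)
      also have "\<dots> = complex_of_real (q i) * w i"
        unfolding w_def u_def by (simp only: sum_distrib_left)
      finally show ?thesis .
    qed
    then show ?thesis using eig[of i] by simp
  qed
  define b where "b = (\<Sum>i\<in>UNIV. q i * (cmod (w i))^2)"
  define c where "c = (\<Sum>x\<in>UNIV. p x * (cmod (u x))^2 / (Z x)^2)"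
  have b_nn: "0 \<le> b" unfolding b_def using q by (intro sum_nonneg) auto
  have c_nn: "0 \<le> c" unfolding c_def using p by (intro sum_nonneg) auto
  have bc: "complex_of_real b = lam * complex_of_real c"
  proof -
    have "complex_of_real b = (\<Sum>i\<in>UNIV. cnj (w i) * (complex_of_real (q i) * w i))"
      unfolding b_def of_real_sum by (intro sum.cong refl) (simp only: of_real_mult complex_norm_square mult_ac)
    also have "\<dots> = lam * (\<Sum>i\<in>UNIV. cnj (w i) * v i)"
      by (simp only: qw, simp add: sum_distrib_left mult_ac)
    also have "(\<Sum>i\<in>UNIV. cnj (w i) * v i) = complex_of_real c"
    proof -
      have "(\<Sum>i\<in>UNIV. cnj (w i) * v i)
          = (\<Sum>x\<in>UNIV. complex_of_real (p x / (Z x)^2) * (cnj (u x) * u x))"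
      proof -
        have "(\<Sum>i\<in>UNIV. cnj (w i) * v i) = (\<Sum>i\<in>UNIV. \<Sum>x\<in>UNIV. complex_of_real (p x / (Z x)^2) * (cnj (u x) * (complex_of_real (a x i) * v i)))"
        proof (intro sum.cong refl)
          fix i
          have e: "p x * a x i / (Z x)^2 = p x / (Z x)^2 * a x i" for x by simp
          show "cnj (w i) * v i = (\<Sum>x\<in>UNIV. complex_of_real (p x / (Z x)^2) * (cnj (u x) * (complex_of_real (a x i) * v i)))"
            unfolding w_def cnj_sum sum_distrib_right
            by (intro sum.cong refl) (simp only: complex_cnj_mult complex_cnj_complex_of_real e of_real_mult mult_ac)
        qed
        also have "\<dots> = (\<Sum>x\<in>UNIV. \<Sum>i\<in>UNIV. complex_of_real (p x / (Z x)^2) * (cnj (u x) * (complex_of_real (a x i) * v i)))"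
          by (rule sum.swap)
        also have "\<dots> = (\<Sum>x\<in>UNIV. complex_of_real (p x / (Z x)^2) * (cnj (u x) * u x))"
          unfolding u_def by (simp only: sum_distrib_left)
        finally show ?thesis .
      qed
      also have "\<dots> = complex_of_real c"
        unfolding c_def of_real_sum by (intro sum.cong refl) (simp only: of_real_mult of_real_divide complex_norm_square, simp add: field_simps)
      finally show ?thesis .
    qed
    finally show ?thesis .
  qed
  show ?thesis
  proof (cases "c = 0")
    case True
    have pz: "p x * (cmod (u x))^2 / (Z x)^2 = 0" for x
      using True unfolding c_def
      by (subst (asm) sum_nonneg_eq_0_iff) (use p in auto)
    have pu: "complex_of_real (p x) * u x = 0" for x
      using Zpos[of x] pz[of x] by auto
    have "w i = 0" for i
    proof -
      have "w i = (\<Sum>x\<in>UNIV. complex_of_real (a x i / (Z x)^2) * (complex_of_real (p x) * u x))"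
        unfolding w_def by (simp add: mult_ac)
      then show ?thesis using pu by simp
    qed
    then have "lam * v i0 = 0" using qw[of i0] by simp
    then have "lam = 0" using vnz by simp
    then show ?thesis by simp
  next
    case False
    then have cpos: "0 < c" using c_nn by simp
    have lamr: "lam = complex_of_real (b / c)"
      using bc False by (simp add: field_simps)
    have "b \<le> c"
    proof -
      have "q i * (cmod (w i))^2 \<le> q i * (\<Sum>x\<in>UNIV. p x * a x i * (cmod (u x))^2 / (Z x)^3)" for i
      proof (cases "q i = 0")
        case True then show ?thesis by simp
      next
        case False
        then have qi: "0 < q i" using q[of i] by (simp add: order_le_less)
        have "cmod (w i) \<le> (\<Sum>x\<in>UNIV. cmod (complex_of_real (p x * a x i / (Z x)^2) * u x))"
          unfolding w_def by (rule norm_sum)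
        also have "\<dots> = (\<Sum>x\<in>UNIV. (p x * a x i / Z x) * (cmod (u x) / Z x))"
        proof (intro sum.cong refl)
          fix x
          have r: "0 \<le> p x * a x i / (Z x)^2"
            using p[of x] a[of x i] Zpos[of x] by (intro divide_nonneg_pos mult_nonneg_nonneg) auto
          have z: "Z x \<noteq> 0" using Zpos[of x] by simp
          show "cmod (complex_of_real (p x * a x i / (Z x)^2) * u x) = (p x * a x i / Z x) * (cmod (u x) / Z x)"
            by (simp only: norm_mult norm_of_real abs_of_nonneg[OF r]) (use z in \<open>simp add: power2_eq_square field_simps\<close>)
        qed
        finally have n1: "cmod (w i) \<le> (\<Sum>x\<in>UNIV. (p x * a x i / Z x) * (cmod (u x) / Z x))" .
        have "(cmod (w i))^2 \<le> (\<Sum>x\<in>UNIV. (p x * a x i / Z x) * (cmod (u x) / Z x))^2"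
          using n1 by (intro power_mono) auto
        also have "\<dots> \<le> (\<Sum>x\<in>UNIV. (p x * a x i / Z x) * (cmod (u x) / Z x)^2)"
          using fp[OF qi] p less_imp_le[OF a] Zpos
          by (intro jensen_sq) (auto intro!: divide_nonneg_pos mult_nonneg_nonneg)
        also have "\<dots> = (\<Sum>x\<in>UNIV. p x * a x i * (cmod (u x))^2 / (Z x)^3)"
          using Zpos by (intro sum.cong refl) (simp add: power2_eq_square power3_eq_cube field_simps)
        finally show ?thesis using qi by (simp add: mult_left_mono)
      qed
      then have "b \<le> (\<Sum>i\<in>UNIV. q i * (\<Sum>x\<in>UNIV. p x * a x i * (cmod (u x))^2 / (Z x)^3))"
        unfolding b_def by (rule sum_mono)
      also have "\<dots> = (\<Sum>x\<in>UNIV. p x * (cmod (u x))^2 / (Z x)^3 * (\<Sum>i\<in>UNIV. q i * a x i))"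
      proof -
        have "(\<Sum>i\<in>UNIV. q i * (\<Sum>x\<in>UNIV. p x * a x i * (cmod (u x))^2 / (Z x)^3))
          = (\<Sum>i\<in>UNIV. \<Sum>x\<in>UNIV. p x * (cmod (u x))^2 / (Z x)^3 * (q i * a x i))"
          by (intro sum.cong refl) (simp add: sum_distrib_left mult_ac)
        also have "\<dots> = (\<Sum>x\<in>UNIV. \<Sum>i\<in>UNIV. p x * (cmod (u x))^2 / (Z x)^3 * (q i * a x i))"
          by (rule sum.swap)
        finally show ?thesis by (simp only: sum_distrib_left)
      qed
      also have "\<dots> = c"
        unfolding c_def using Zpos
        by (intro sum.cong refl) (simp add: Zdef[symmetric] power2_eq_square power3_eq_cube field_simps)
      finally show ?thesis .
    qed
    then have "b / c \<le> 1" using cpos by simp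
    then show ?thesis using lamr by simp
  qed
qed

theorem lemma5:
  fixes p qs :: "'a::finite \<Rightarrow> real"
    and d :: "'a \<Rightarrow> 'a \<Rightarrow> real"
    and f :: "real \<Rightarrow> real"
    and s1 s2 :: real
    and lam :: complex
  assumes p: "is_pmf p"
    and d: "\<And>x y. 0 \<le> d x y"
    and s1: "0 \<le> s1" and s2: "0 \<le> s2"
    and f_convex: "convex_on {0<..} f"
    and f_diff: "\<And>t. 0 < t \<Longrightarrow> f differentiable (at t)"
    and f_diff2: "\<And>t. 0 < t \<Longrightarrow> (deriv f) differentiable (at t)"
    and f1: "f 1 = 0"
    and qs: "is_pmf qs"
    and fixp: "S_fixed_point s1 s2 d f p qs"
    and ev: "eigenvalue_of (M_mat s1 s2 d f p qs) lam"
  shows "Im lam = 0 \<and> Re lam \<le> 1"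
proof -
  define a where "a = A_fac s1 s2 d f p qs"
  define Z where "Z x = (\<Sum>k\<in>UNIV. qs k * a x k)" for x
  have qnn: "\<And>i. 0 \<le> qs i" using qs unfolding is_pmf_def by auto
  have pnn: "\<And>x. 0 \<le> p x" using p unfolding is_pmf_def by auto
  have apos: "\<And>x i. 0 < a x i" unfolding a_def A_fac_def by simp
  obtain k0 where k0: "qs k0 \<noteq> 0"
    using qs unfolding is_pmf_def by (metis sum.neutral zero_neq_one)
  have Zpos: "0 < Z x" for x
    unfolding Z_def
    by (rule sum_pos2[where i=k0]) (use qnn apos k0 in \<open>auto intro: mult_pos_pos mult_nonneg_nonneg less_imp_le simp: order_le_less\<close>)
  have fp: "(\<Sum>x\<in>UNIV. p x * a x i / Z x) = 1" if "0 < qs i" for i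
  proof -
    have "qs i = qs i * (\<Sum>x\<in>UNIV. p x * a x i / Z x)"
      using fixp unfolding S_fixed_point_def S_image_def a_def Z_def by blast
    then show ?thesis using that by simp
  qed
  obtain v :: "complex^'a" where vnz: "v \<noteq> 0"
    and mv: "(\<chi> i j. complex_of_real (M_mat s1 s2 d f p qs $ i $ j)) *v v = lam *s v"
    using ev unfolding eigenvalue_of_def by blast
  obtain i0 where i0: "v $ i0 \<noteq> 0" using vnz by (metis vec_eq_iff zero_index)
  have eig: "(\<Sum>j\<in>UNIV. complex_of_real (qs i * (\<Sum>x\<in>UNIV. p x * a x i * a x j / (Z x)^2)) * v $ j) = lam * v $ i" for i
  proof -
    have "((\<chi> i j. complex_of_real (M_mat s1 s2 d f p qs $ i $ j)) *v v) $ i = (lam *s v) $ i"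
      using mv by simp
    then show ?thesis
      unfolding matrix_vector_mult_def M_mat_def a_def Z_def by simp
  qed
  show ?thesis
    by (rule core[where v = "\<lambda>j. v $ j", OF qnn pnn apos Z_def Zpos fp eig i0])
qed

end
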